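(* Let $\mathcal{A}=\{A_i\}_{i\in\Lambda}$ be a finite family of $GL_{d+1}(\mathbb{R})$ matrices, and let $\Phi_{\mathcal{A}}=\{\varphi_{A_i}\}_{i\in\Lambda}$ be the induced IFS on the unit sphere $\mathbb{S}^d$. If $\Phi_{\mathcal{A}}$ satisfies the strong exponential separation condition on a nonempty set, then $\mathcal{A}$ is strongly Diophantine.
   Context: $\varphi_A(x)=A\cdot x=Ax/\|Ax\|$ for unit vectors $x\in\mathbb{S}^d$; $\mathbb S^d$ carries the Euclidean metric. For $\mathbf{i}=i_1\ldots i_n$, $A_{\mathbf i}=A_{i_1}\cdots A_{i_n}$ and $\varphi_{\mathbf i}=\varphi_{A_{i_1}}\circ\cdots\circ\varphi_{A_{i_n}}$. $\Phi_{\mathcal{A}}$ satisfies the strong exponential separation condition on $J\subset\mathbb S^d$ if $\varphi_{\mathbf i}\equiv\varphi_{\mathbf j}$ only when $\mathbf i=\mathbf j$, and there is $c>0$ such that for all $n$ and all $\mathbf{i},\mathbf{j}\in\Lambda^n$ with $i_1\ne j_1$ and $\varphi_{\mathbf i}\not\equiv\varphi_{\mathbf j}$, $\sup_{x\in J}\|\varphi_{\mathbf i}(x)-\varphi_{\mathbf j}(x)\|>c^n$. $\mathcal{A}$ is strongly Diophantine if there is $c>0$ such that $\|A_{\mathbf i}-A_{\mathbf j}\|>c^n$ (operator norm) for all $n$ and all $\mathbf i\ne\mathbf j\in\Lambda^n$. *)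

theory Defs
  imports "HOL-Analysis.Analysis"
begin

text \<open>Projective action of a matrix on the unit sphere: phi_A(x) = Ax / |Ax|.\<close>
definition proj_act :: "real^'n^'n \<Rightarrow> real^'n \<Rightarrow> real^'n" where
  "proj_act M x = (1 / norm (M *v x)) *\<^sub>R (M *v x)"

text \<open>Product A_w = A_{w_1} ... A_{w_n} of a word w (a list of indices).\<close>
definition word_mat :: "('i \<Rightarrow> real^'n^'n) \<Rightarrow> 'i list \<Rightarrow> real^'n^'n" where
  "word_mat A w = foldr (\<lambda>i M. A i ** M) w (mat 1)"

text \<open>Composed map phi_w = phi_{A_{w_1}} o ... o phi_{A_{w_n}}.\<close>
definition word_map :: "('i \<Rightarrow> real^'n^'n) \<Rightarrow> 'i list \<Rightarrow> real^'n \<Rightarrow> real^'n" where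
  "word_map A w = foldr (\<lambda>i f. proj_act (A i) \<circ> f) w id"

text \<open>Words of length n over the alphabet Lambda.\<close>
definition words :: "'i set \<Rightarrow> nat \<Rightarrow> 'i list set" where
  "words \<Lambda> n = {w. set w \<subseteq> \<Lambda> \<and> length w = n}"

text \<open>Identity of maps on the unit sphere S^d.\<close>
definition same_on_sphere :: "(real^'n \<Rightarrow> real^'n) \<Rightarrow> (real^'n \<Rightarrow> real^'n) \<Rightarrow> bool" where
  "same_on_sphere f g \<longleftrightarrow> (\<forall>x\<in>sphere 0 1. f x = g x)"

definition strong_exp_sep :: "'i set \<Rightarrow> ('i \<Rightarrow> real^'n^'n) \<Rightarrow> (real^'n) set \<Rightarrow> bool" where
  "strong_exp_sep \<Lambda> A J \<longleftrightarrow>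
     (\<forall>v w. set v \<subseteq> \<Lambda> \<longrightarrow> set w \<subseteq> \<Lambda> \<longrightarrow>
        same_on_sphere (word_map A v) (word_map A w) \<longrightarrow> v = w) \<and>
     (\<exists>c>0. \<forall>n. \<forall>v\<in>words \<Lambda> n. \<forall>w\<in>words \<Lambda> n.
        hd v \<noteq> hd w \<longrightarrow> \<not> same_on_sphere (word_map A v) (word_map A w) \<longrightarrow>
        (SUP x\<in>J. norm (word_map A v x - word_map A w x)) > c ^ n)"

definition strongly_diophantine :: "'i set \<Rightarrow> ('i \<Rightarrow> real^'n^'n) \<Rightarrow> bool" where
  "strongly_diophantine \<Lambda> A \<longleftrightarrow>
     (\<exists>c>0. \<forall>n. \<forall>v\<in>words \<Lambda> n. \<forall>w\<in>words \<Lambda> n.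
        v \<noteq> w \<longrightarrow> onorm ((*v) (word_mat A v - word_mat A w)) > c ^ n)"

end

theory Submission
  imports Defs
begin

lemma norm_proj_act_le: "norm (proj_act M x) \<le> 1"
  by (simp add: proj_act_def)

lemma proj_act_scale:
  assumes "t > 0"
  shows "proj_act M (t *\<^sub>R y) = proj_act M y"
  using assms by (simp add: proj_act_def matrix_vector_mult_scaleR)

lemma word_mat_Cons: "word_mat A (i # w) = A i ** word_mat A w"
  by (simp add: word_mat_def)

lemma word_mat_append: "word_mat A (u @ v) = word_mat A u ** word_mat A v"
  by (induction u) (auto simp: word_mat_def matrix_mul_assoc matrix_mul_lid)

lemma invertible_lower:
  fixes M :: "real^'n^'n"
  assumes "invertible M"
  shows "\<exists>b>0. \<forall>y. norm (M *v y) \<ge> b * norm y"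
proof -
  obtain M' where M': "M' ** M = mat 1" using assms by (auto simp: invertible_def)
  let ?o = "onorm ((*v) M')"
  have o0: "?o \<ge> 0" by (rule onorm_pos_le) simp
  have "\<forall>y. norm (M *v y) \<ge> (1 / (?o + 1)) * norm y"
  proof
    fix y
    have "norm y = norm (M' *v (M *v y))" using M' by (simp add: matrix_vector_mul_assoc)
    also have "\<dots> \<le> ?o * norm (M *v y)" by (rule onorm) simp
    also have "\<dots> \<le> (?o + 1) * norm (M *v y)" by (simp add: mult_right_mono)
    finally show "norm (M *v y) \<ge> (1 / (?o + 1)) * norm y" using o0
      by (simp add: field_simps)
  qed
  then show ?thesis using o0 by (intro exI[of _ "1 / (?o + 1)"]) auto
qed

lemma word_lower:
  fixes A :: "'i \<Rightarrow> real^'n^'n"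
  assumes "\<forall>i\<in>L. \<forall>y. norm (A i *v y) \<ge> b * norm y" "b \<ge> 0"
  shows "set w \<subseteq> L \<Longrightarrow> norm (word_mat A w *v y) \<ge> b ^ length w * norm y"
proof (induction w arbitrary: y)
  case Nil
  then show ?case by (simp add: word_mat_def)
next
  case (Cons i w)
  have "b ^ length (i # w) * norm y = b * (b ^ length w * norm y)" by simp
  also have "\<dots> \<le> b * norm (word_mat A w *v y)"
    using Cons assms(2) by (intro mult_left_mono) auto
  also have "\<dots> \<le> norm (A i *v (word_mat A w *v y))" using assms(1) Cons by auto
  finally show ?case by (simp add: word_mat_Cons matrix_vector_mul_assoc)
qed

lemma word_map_eq:
  fixes A :: "'i \<Rightarrow> real^'n^'n"
  assumes "\<forall>i\<in>L. invertible (A i)" "norm x = 1"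
  shows "set w \<subseteq> L \<Longrightarrow> word_map A w x = proj_act (word_mat A w) x"
proof (induction w)
  case Nil
  then show ?case using assms(2) by (simp add: word_map_def word_mat_def proj_act_def)
next
  case (Cons i w)
  have inv: "invertible (word_mat A w)"
    using Cons.prems assms(1)
  proof (induction w)
    case Nil then show ?case by (simp add: word_mat_def invertible_def)
  next
    case (Cons j w') then show ?case
      by (simp add: word_mat_Cons invertible_mult)
  qed
  have nz: "word_mat A w *v x \<noteq> 0"
  proof
    assume "word_mat A w *v x = 0"
    then have "x = 0" using inv
      by (metis invertible_def matrix_vector_mul_assoc matrix_vector_mul_lid matrix_vector_mult_0_right)
    then show False using assms(2) by simp
  qed
  have "word_map A (i # w) x = proj_act (A i) (word_map A w x)" by (simp add: word_map_def)
  also have "\<dots> = proj_act (A i) ((1 / norm (word_mat A w *v x)) *\<^sub>R (word_mat A w *v x))"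
    using Cons by (simp add: proj_act_def)
  also have "\<dots> = proj_act (A i) (word_mat A w *v x)" using nz by (simp add: proj_act_scale)
  also have "\<dots> = proj_act (word_mat A (i # w)) x"
    by (simp add: proj_act_def word_mat_Cons matrix_vector_mul_assoc)
  finally show ?case .
qed

lemma normalize_diff:
  fixes a b :: "real^'n"
  assumes "a \<noteq> 0"
  shows "norm ((1 / norm a) *\<^sub>R a - (1 / norm b) *\<^sub>R b) \<le> 2 * norm (a - b) / norm a"
proof (cases "b = 0")
  case True
  then show ?thesis using assms by simp
next
  case False
  have na: "norm a > 0" using assms by simp
  have nb: "norm b > 0" using False by simp
  have e: "(1 / norm a) *\<^sub>R a - (1 / norm b) *\<^sub>R b
      = (1 / norm a) *\<^sub>R (a - b) + ((1 / norm a) - (1 / norm b)) *\<^sub>R b"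
    by (simp add: scaleR_diff_right scaleR_diff_left)
  have t: "norm ((1 / norm a) *\<^sub>R a - (1 / norm b) *\<^sub>R b)
      \<le> norm ((1 / norm a) *\<^sub>R (a - b)) + norm (((1 / norm a) - (1 / norm b)) *\<^sub>R b)"
    unfolding e by (rule norm_triangle_ineq)
  have t1: "norm ((1 / norm a) *\<^sub>R (a - b)) = norm (a - b) / norm a" using na by simp
  have q0: "\<And>x y::real. x > 0 \<Longrightarrow> y > 0 \<Longrightarrow> (1 / x - 1 / y) * y = (y - x) / x"
    by (simp add: field_simps)
  have q: "(1 / norm a - 1 / norm b) * norm b = (norm b - norm a) / norm a"
    using q0[OF na nb] .
  have t2: "norm (((1 / norm a) - (1 / norm b)) *\<^sub>R b) = \<bar>norm b - norm a\<bar> / norm a"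
  proof -
    have "norm (((1 / norm a) - (1 / norm b)) *\<^sub>R b) = \<bar>1 / norm a - 1 / norm b\<bar> * norm b"
      by simp
    also have "\<dots> = \<bar>(1 / norm a - 1 / norm b) * norm b\<bar>" by (simp only: abs_mult abs_norm_cancel)
    also have "\<dots> = \<bar>norm b - norm a\<bar> / norm a" unfolding q by (rule abs_div_pos[OF na, symmetric])
    finally show ?thesis .
  qed
  have t3: "\<bar>norm b - norm a\<bar> \<le> norm (a - b)"
    using norm_triangle_ineq3[of a b] by (simp add: abs_minus_commute)
  have t4: "\<bar>norm b - norm a\<bar> / norm a \<le> norm (a - b) / norm a"
    using t3 na by (simp add: divide_right_mono)
  have "norm ((1 / norm a) *\<^sub>R a - (1 / norm b) *\<^sub>R b) \<le> norm (a - b) / norm a + norm (a - b) / norm a"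
    using t t1 t2 t4 by linarith
  then show ?thesis by simp
qed

lemma common_prefix:
  "length v = length w \<Longrightarrow> v \<noteq> w \<Longrightarrow>
   \<exists>u v' w'. v = u @ v' \<and> w = u @ w' \<and> v' \<noteq> [] \<and> w' \<noteq> [] \<and> hd v' \<noteq> hd w'"
proof (induction v arbitrary: w)
  case Nil then show ?case by simp
next
  case (Cons a v)
  then obtain b w0 where w: "w = b # w0" by (cases w) auto
  show ?case
  proof (cases "a = b")
    case True
    then have "v \<noteq> w0" "length v = length w0" using Cons.prems w by auto
    then obtain u v' w' where "v = u @ v' \<and> w0 = u @ w' \<and> v' \<noteq> [] \<and> w' \<noteq> [] \<and> hd v' \<noteq> hd w'"
      using Cons.IH by blast
    then show ?thesis using True w by (intro exI[of _ "a # u"] exI[of _ v'] exI[of _ w']) auto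
  next
    case False
    then show ?thesis using w by (intro exI[of _ "[]"] exI[of _ "a # v"] exI[of _ w]) auto
  qed
qed

theorem proposition2p2:
  fixes \<Lambda> :: "'i set" and A :: "'i \<Rightarrow> real^'n^'n" and J :: "(real^'n) set"
  assumes "finite \<Lambda>"
    and "\<forall>i\<in>\<Lambda>. invertible (A i)"
    and "J \<subseteq> sphere 0 1" and "J \<noteq> {}"
    and "strong_exp_sep \<Lambda> A J"
  shows "strongly_diophantine \<Lambda> A"
proof -
  have "\<forall>i\<in>\<Lambda>. \<exists>b>0. \<forall>y. norm (A i *v y) \<ge> b * norm y"
    using assms(2) invertible_lower by blast
  then obtain bf where bf: "\<forall>i\<in>\<Lambda>. bf i > 0 \<and> (\<forall>y. norm (A i *v y) \<ge> bf i * norm y)"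
    by metis
  define \<beta> where "\<beta> = Min (insert 1 (bf ` \<Lambda>))"
  have fin: "finite (insert 1 (bf ` \<Lambda>))" using assms(1) by simp
  have \<beta>pos: "\<beta> > 0" unfolding \<beta>_def using fin bf by (subst Min_gr_iff) auto
  have \<beta>le1: "\<beta> \<le> 1" unfolding \<beta>_def using fin by simp
  have \<beta>le: "\<forall>i\<in>\<Lambda>. \<beta> \<le> bf i" unfolding \<beta>_def using fin by simp
  have low: "\<forall>i\<in>\<Lambda>. \<forall>y. norm (A i *v y) \<ge> \<beta> * norm y"
  proof (intro ballI allI)
    fix i and y :: "real^'n" assume i: "i \<in> \<Lambda>"
    have "\<beta> * norm y \<le> bf i * norm y" using \<beta>le i by (simp add: mult_right_mono)
    also have "\<dots> \<le> norm (A i *v y)" using bf i by blast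
    finally show "\<beta> * norm y \<le> norm (A i *v y)" .
  qed
  have wl: "\<And>w y. set w \<subseteq> \<Lambda> \<Longrightarrow> norm (word_mat A w *v y) \<ge> \<beta> ^ length w * norm y"
    using word_lower[OF low] \<beta>pos by simp
  note h = assms(5)[unfolded strong_exp_sep_def]
  obtain c where c: "c > 0" and sep: "\<forall>n. \<forall>v\<in>words \<Lambda> n. \<forall>w\<in>words \<Lambda> n.
        hd v \<noteq> hd w \<longrightarrow> \<not> same_on_sphere (word_map A v) (word_map A w) \<longrightarrow>
        (SUP x\<in>J. norm (word_map A v x - word_map A w x)) > c ^ n"
    using conjunct2[OF h] by (elim exE conjE)
  have inj: "\<And>v w. set v \<subseteq> \<Lambda> \<Longrightarrow> set w \<subseteq> \<Lambda> \<Longrightarrow>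
        same_on_sphere (word_map A v) (word_map A w) \<Longrightarrow> v = w"
    using conjunct1[OF h] by blast
  define c0 where "c0 = min c 1"
  have c0: "c0 > 0" "c0 \<le> 1" "c0 \<le> c" using c by (auto simp: c0_def)
  show ?thesis unfolding strongly_diophantine_def
  proof (intro exI[of _ "\<beta> * c0 / 2"] conjI allI ballI impI)
    show "\<beta> * c0 / 2 > 0" using \<beta>pos c0 by simp
    fix n v w assume v: "v \<in> words \<Lambda> n" and w: "w \<in> words \<Lambda> n" and vw: "v \<noteq> w"
    from v w have lv: "length v = n" "length w = n" "set v \<subseteq> \<Lambda>" "set w \<subseteq> \<Lambda>"
      by (auto simp: words_def)
    obtain u v' w' where dec: "v = u @ v'" "w = u @ w'" "v' \<noteq> []" "w' \<noteq> []" "hd v' \<noteq> hd w'"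
      using common_prefix[of v w] lv vw by auto
    define m where "m = length v'"
    have lw': "length w' = m" using lv dec m_def by simp
    have nm: "n = length u + m" using lv dec m_def by simp
    have m1: "m \<ge> 1" using dec m_def by (cases v') auto
    have sv': "set v' \<subseteq> \<Lambda>" "set w' \<subseteq> \<Lambda>" "set u \<subseteq> \<Lambda>" using lv dec by auto
    have "v' \<noteq> w'" using dec by auto
    then have nsame: "\<not> same_on_sphere (word_map A v') (word_map A w')" using inj sv' by blast
    have "(SUP x\<in>J. norm (word_map A v' x - word_map A w' x)) > c ^ m"
      using sep sv' lw' dec nsame m_def by (auto simp: words_def)
    moreover have "bdd_above ((\<lambda>x. norm (word_map A v' x - word_map A w' x)) ` J)"
    proof (rule bdd_aboveI2)
      fix x assume "x \<in> J"
      then have x1: "norm x = 1" using assms(3) by auto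
      have "norm (word_map A v' x - word_map A w' x) \<le> norm (word_map A v' x) + norm (word_map A w' x)"
        by (rule norm_triangle_ineq4)
      also have "\<dots> \<le> 2" using word_map_eq[OF assms(2) x1] sv' norm_proj_act_le
        by (metis add_mono one_add_one)
      finally show "norm (word_map A v' x - word_map A w' x) \<le> 2" .
    qed
    ultimately obtain x where xJ: "x \<in> J" and xgt: "c ^ m < norm (word_map A v' x - word_map A w' x)"
      using less_cSUP_iff[OF assms(4)] by blast
    have x1: "norm x = 1" using xJ assms(3) by auto
    define a where "a = word_mat A v' *v x"
    define b where "b = word_mat A w' *v x"
    have ageq: "norm a \<ge> \<beta> ^ m" using wl[OF sv'(1), of x] x1 by (simp add: a_def m_def)
    have apos: "norm a > 0" using ageq \<beta>pos by (meson less_le_trans zero_less_power)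
    have "word_map A v' x - word_map A w' x = (1 / norm a) *\<^sub>R a - (1 / norm b) *\<^sub>R b"
      using word_map_eq[OF assms(2) x1] sv' by (simp add: proj_act_def a_def b_def)
    then have "c ^ m < 2 * norm (a - b) / norm a" using xgt normalize_diff[of a b] apos by auto
    then have "c ^ m * norm a < 2 * norm (a - b)" using apos by (simp add: field_simps)
    moreover have "c0 ^ m * \<beta> ^ m \<le> c ^ m * norm a"
      using c0 ageq \<beta>pos by (intro mult_mono power_mono) auto
    ultimately have ab: "c0 ^ m * \<beta> ^ m / 2 < norm (a - b)" by simp
    define D where "D = word_mat A v - word_mat A w"
    have "D *v x = word_mat A u *v (a - b)"
      by (simp add: D_def dec word_mat_append a_def b_def matrix_vector_mul_assoc
          matrix_vector_mult_diff_distrib matrix_vector_mult_diff_rdistrib)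
    then have "norm (D *v x) \<ge> \<beta> ^ length u * norm (a - b)" using wl[OF sv'(3)] by simp
    moreover have "norm (D *v x) \<le> onorm ((*v) D)" using onorm[of "(*v) D" x] x1 by simp
    moreover have "\<beta> ^ length u * (c0 ^ m * \<beta> ^ m / 2) < \<beta> ^ length u * norm (a - b)"
      using ab \<beta>pos by simp
    moreover have "(\<beta> * c0 / 2) ^ n \<le> \<beta> ^ length u * (c0 ^ m * \<beta> ^ m / 2)"
    proof -
      have "(\<beta> * c0 / 2) ^ n = \<beta> ^ length u * \<beta> ^ m * c0 ^ n * (1/2) ^ n"
        by (simp add: nm power_mult_distrib power_add power_divide)
      also have "\<dots> \<le> \<beta> ^ length u * \<beta> ^ m * c0 ^ m * (1/2) ^ 1"
      proof -
        have "c0 ^ n \<le> c0 ^ m" using c0 nm by (intro power_decreasing) auto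
        moreover have "(1/2::real) ^ n \<le> (1/2) ^ 1" using m1 nm by (intro power_decreasing) auto
        ultimately show ?thesis using \<beta>pos c0
          by (intro mult_mono mult_left_mono) auto
      qed
      also have "\<dots> = \<beta> ^ length u * (c0 ^ m * \<beta> ^ m / 2)"
        by (simp only: power_one_right mult.assoc mult.left_commute[of "\<beta> ^ m"])
      finally show ?thesis .
    qed
    ultimately show "(\<beta> * c0 / 2) ^ n < onorm ((*v) (word_mat A v - word_mat A w))"
      unfolding D_def by linarith
  qed
qed

end
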